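(* If $T$ is a tree of order $p\ge 3$, then $\gamma_{[3R]}(T)\le \frac{7p}{4}$.
   Context: For a graph $\Gamma=(V,E)$ and $h:V\to\{0,1,2,3,4\}$, let $AN(v)=\{w\in N(v):h(w)\ge 1\}$, $AN[v]=AN(v)\cup\{v\}$ and $h(S)=\sum_{u\in S}h(u)$. $h$ is a triple Roman dominating function (3RDF) if every $v$ with $h(v)<3$ satisfies $h(AN[v])\ge|AN(v)|+3$. The triple Roman domination number $\gamma_{[3R]}(\Gamma)$ is the minimum weight $h(V)$ of a 3RDF of $\Gamma$. *)

theory Defs
  imports Complex_Main
begin

definition simple_graph :: "'a set \<Rightarrow> ('a \<Rightarrow> 'a \<Rightarrow> bool) \<Rightarrow> bool" where
  "simple_graph V E \<longleftrightarrow> finite V \<and> (\<forall>u v. E u v \<longrightarrow> u \<in> V \<and> v \<in> V)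
     \<and> (\<forall>u v. E u v \<longrightarrow> E v u) \<and> (\<forall>v. \<not> E v v)"

definition is_walk :: "'a set \<Rightarrow> ('a \<Rightarrow> 'a \<Rightarrow> bool) \<Rightarrow> 'a list \<Rightarrow> bool" where
  "is_walk V E xs \<longleftrightarrow> xs \<noteq> [] \<and> set xs \<subseteq> V \<and> (\<forall>i. Suc i < length xs \<longrightarrow> E (xs ! i) (xs ! Suc i))"

definition connected_graph :: "'a set \<Rightarrow> ('a \<Rightarrow> 'a \<Rightarrow> bool) \<Rightarrow> bool" where
  "connected_graph V E \<longleftrightarrow> V \<noteq> {} \<and>
     (\<forall>u\<in>V. \<forall>v\<in>V. \<exists>xs. is_walk V E xs \<and> hd xs = u \<and> last xs = v)"

definition is_cycle :: "'a set \<Rightarrow> ('a \<Rightarrow> 'a \<Rightarrow> bool) \<Rightarrow> 'a list \<Rightarrow> bool" where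
  "is_cycle V E xs \<longleftrightarrow> length xs \<ge> 3 \<and> distinct xs \<and> is_walk V E xs \<and> E (last xs) (hd xs)"

definition acyclic_graph :: "'a set \<Rightarrow> ('a \<Rightarrow> 'a \<Rightarrow> bool) \<Rightarrow> bool" where
  "acyclic_graph V E \<longleftrightarrow> (\<nexists>xs. is_cycle V E xs)"

definition is_tree :: "'a set \<Rightarrow> ('a \<Rightarrow> 'a \<Rightarrow> bool) \<Rightarrow> bool" where
  "is_tree V E \<longleftrightarrow> simple_graph V E \<and> connected_graph V E \<and> acyclic_graph V E"

definition nbhd :: "'a set \<Rightarrow> ('a \<Rightarrow> 'a \<Rightarrow> bool) \<Rightarrow> 'a \<Rightarrow> 'a set" where
  "nbhd V E v = {w \<in> V. E v w}"

definition active_nbhd :: "'a set \<Rightarrow> ('a \<Rightarrow> 'a \<Rightarrow> bool) \<Rightarrow> ('a \<Rightarrow> nat) \<Rightarrow> 'a \<Rightarrow> 'a set" where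
  "active_nbhd V E h v = {w \<in> nbhd V E v. h w \<ge> 1}"

definition is_3RDF :: "'a set \<Rightarrow> ('a \<Rightarrow> 'a \<Rightarrow> bool) \<Rightarrow> ('a \<Rightarrow> nat) \<Rightarrow> bool" where
  "is_3RDF V E h \<longleftrightarrow> (\<forall>v\<in>V. h v \<le> 4) \<and>
     (\<forall>v\<in>V. h v < 3 \<longrightarrow>
        sum h (insert v (active_nbhd V E h v)) \<ge> card (active_nbhd V E h v) + 3)"

definition weight :: "'a set \<Rightarrow> ('a \<Rightarrow> nat) \<Rightarrow> nat" where
  "weight V h = sum h V"

definition triple_roman_domination_number :: "'a set \<Rightarrow> ('a \<Rightarrow> 'a \<Rightarrow> bool) \<Rightarrow> nat" where
  "triple_roman_domination_number V E = (LEAST w. \<exists>h. is_3RDF V E h \<and> weight V h = w)"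

end

theory Submission
  imports Defs
begin


definition good :: "'a set \<Rightarrow> ('a \<Rightarrow> 'a \<Rightarrow> bool) \<Rightarrow> bool" where
 "good V E \<longleftrightarrow> simple_graph V E \<and> (\<forall>v\<in>V. \<exists>w. E v w) \<and>
   (\<forall>a b. E a b \<longrightarrow> (\<exists>c. c \<noteq> b \<and> E a c) \<or> (\<exists>c. c \<noteq> a \<and> E b c))"

definition crit :: "('a \<Rightarrow> 'a \<Rightarrow> bool) \<Rightarrow> 'a \<Rightarrow> 'a \<Rightarrow> bool" where
 "crit E u v \<longleftrightarrow> (\<forall>x. E u x \<longrightarrow> x = v) \<or> (\<forall>x. E v x \<longrightarrow> x = u) \<or>
   (\<exists>x. x \<noteq> v \<and> E u x \<and> (\<forall>y. E u y \<longrightarrow> y = v \<or> y = x) \<and> (\<forall>y. E x y \<longrightarrow> y = u)) \<or>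
   (\<exists>x. x \<noteq> u \<and> E v x \<and> (\<forall>y. E v y \<longrightarrow> y = u \<or> y = x) \<and> (\<forall>y. E x y \<longrightarrow> y = v))"

lemma cond_sub:
  fixes h :: "'a \<Rightarrow> nat"
  assumes "finite B" "A \<subseteq> B" "\<forall>w\<in>B. h w \<ge> 1" "v \<notin> B" "h v + sum h A \<ge> card A + 3"
  shows "sum h (insert v B) \<ge> card B + 3"
proof -
  have fA: "finite A" using assms finite_subset by blast
  have s: "sum h B = sum h A + sum h (B - A)" using assms
    by (metis sum.subset_diff add.commute)
  have "card (B - A) = sum (\<lambda>_. 1::nat) (B - A)" by simp
  also have "\<dots> \<le> sum h (B - A)" using assms by (intro sum_mono) auto
  finally have t: "card (B - A) \<le> sum h (B - A)" .
  have c: "card B = card A + card (B - A)" using assms fA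
    by (metis card_Diff_subset card_mono le_add_diff_inverse)
  have "sum h (insert v B) = h v + sum h B" using assms by simp
  then show ?thesis using s t c assms(5) by linarith
qed

lemma nbhd_fin: "simple_graph V E \<Longrightarrow> finite (nbhd V E v)"
  unfolding simple_graph_def nbhd_def by auto

lemma witness:
  fixes h :: "'a \<Rightarrow> nat"
  assumes "simple_graph V E" "A \<subseteq> nbhd V E v" "\<forall>w\<in>A. h w \<ge> 1" "h v + sum h A \<ge> card A + 3"
  shows "sum h (insert v (active_nbhd V E h v)) \<ge> card (active_nbhd V E h v) + 3"
proof (rule cond_sub[OF _ _ _ _ assms(4)])
  show "finite (active_nbhd V E h v)" using nbhd_fin[OF assms(1)] unfolding active_nbhd_def by auto
  show "A \<subseteq> active_nbhd V E h v" using assms(2,3) unfolding active_nbhd_def by auto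
  show "\<forall>w\<in>active_nbhd V E h v. 1 \<le> h w" unfolding active_nbhd_def by auto
  show "v \<notin> active_nbhd V E h v" using assms(1) unfolding active_nbhd_def nbhd_def simple_graph_def by auto
qed

lemma mono3:
  assumes "simple_graph V E" "\<And>a b. E' a b \<Longrightarrow> E a b" "is_3RDF V E' h"
  shows "is_3RDF V E h"
  unfolding is_3RDF_def
proof (intro conjI ballI impI)
  fix v assume "v \<in> V" then show "h v \<le> 4" using assms(3) unfolding is_3RDF_def by auto
next
  fix v assume v: "v \<in> V" "h v < 3"
  have "sum h (insert v (active_nbhd V E' h v)) \<ge> card (active_nbhd V E' h v) + 3"
    using assms(3) v unfolding is_3RDF_def by auto
  moreover have "\<not> E' v v" using assms(1,2) unfolding simple_graph_def by blast
  then have "v \<notin> active_nbhd V E' h v" unfolding active_nbhd_def nbhd_def by auto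
  moreover have "finite (active_nbhd V E' h v)"
    using assms(1) unfolding active_nbhd_def nbhd_def simple_graph_def by auto
  ultimately have "h v + sum h (active_nbhd V E' h v) \<ge> card (active_nbhd V E' h v) + 3" by simp
  then show "card (active_nbhd V E h v) + 3 \<le> sum h (insert v (active_nbhd V E h v))"
    by (rule witness[OF assms(1), rotated 2]) (use assms(2) in \<open>auto simp: active_nbhd_def nbhd_def\<close>)
qed

lemma remove_good:
  assumes g: "good V E" and e: "E u v" and nc: "\<not> crit E u v"
  shows "good V (\<lambda>a b. E a b \<and> \<not> ((a = u \<and> b = v) \<or> (a = v \<and> b = u)))"
  using assms unfolding good_def crit_def simple_graph_def
  apply (intro conjI)
  apply blast
  apply blast
  apply blast
  apply blast
  apply metis
  apply (intro allI impI)
  subgoal for a b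
    apply (cases "a = u"; cases "a = v"; cases "b = u"; cases "b = v")
    apply metis+
    done
  done



locale cg =
  fixes V :: "'a set" and E :: "'a \<Rightarrow> 'a \<Rightarrow> bool"
  assumes gd: "good V E" and allcrit: "\<And>a b. E a b \<Longrightarrow> crit E a b"
begin

abbreviation N where "N v \<equiv> nbhd V E v"
definition leaf where "leaf v \<longleftrightarrow> v \<in> V \<and> card (N v) = 1"
definition leg where "leg x \<longleftrightarrow> x \<in> V \<and> card (N x) = 2 \<and> (\<exists>l\<in>N x. leaf l) \<and> (\<exists>w\<in>N x. \<not> leaf w)"
definition center where "center c \<longleftrightarrow> c \<in> V \<and> \<not> leaf c \<and> \<not> leg c"

lemma sg: "simple_graph V E" using gd unfolding good_def by auto

lemma Nmem: "w \<in> N v \<longleftrightarrow> E v w"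
  using sg unfolding nbhd_def simple_graph_def by auto

lemma Nfin: "finite (N v)" using nbhd_fin[OF sg] .

lemma Esym: "E a b \<Longrightarrow> E b a" using sg unfolding simple_graph_def by auto
lemma Eirr: "\<not> E a a" using sg unfolding simple_graph_def by auto
lemma EV: "E a b \<Longrightarrow> a \<in> V \<and> b \<in> V" using sg unfolding simple_graph_def by auto

lemma Nne: "v \<in> V \<Longrightarrow> N v \<noteq> {}" using gd Nmem unfolding good_def by (metis empty_iff)

lemma leaf_N: "leaf l \<Longrightarrow> \<exists>u. N l = {u}"
  unfolding leaf_def by (auto simp: card_1_singleton_iff)

lemma leafnotleg: "leaf v \<Longrightarrow> \<not> leg v" unfolding leaf_def leg_def by auto

lemma leaf_nb: assumes "leaf l" "N l = {u}" shows "\<not> leaf u" "u \<in> V"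
proof -
  have e: "E l u" using assms Nmem by auto
  then show "u \<in> V" using EV by auto
  have "\<not> (\<exists>c. c \<noteq> u \<and> E l c)" using assms Nmem by auto
  then obtain c where c: "c \<noteq> l" "E u c" using gd e unfolding good_def by blast
  have "{l, c} \<subseteq> N u" using c e Esym Nmem by auto
  then have "card {l,c} \<le> card (N u)" using Nfin card_mono by blast
  then show "\<not> leaf u" using c unfolding leaf_def by auto
qed

lemma leg_N: assumes "leg x"
  shows "\<exists>l w. N x = {l, w} \<and> l \<noteq> w \<and> leaf l \<and> \<not> leaf w \<and> w \<in> V"
proof -
  obtain a b where ab: "N x = {a,b}" "a \<noteq> b" using assms unfolding leg_def by (auto simp: card_2_iff)
  obtain l w where "l \<in> N x" "leaf l" "w \<in> N x" "\<not> leaf w" using assms unfolding leg_def by auto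
  moreover have "w \<in> V" using \<open>w \<in> N x\<close> unfolding nbhd_def by auto
  moreover have "l \<noteq> w" using calculation by auto
  moreover have "N x = {l, w}" using calculation ab by auto
  ultimately show ?thesis by blast
qed

lemma center_deg: assumes "center c" shows "card (N c) \<ge> 2"
proof -
  have "N c \<noteq> {}" using assms Nne unfolding center_def by auto
  then have "card (N c) \<noteq> 0" using Nfin by auto
  moreover have "card (N c) \<noteq> 1" using assms unfolding center_def leaf_def by auto
  ultimately show ?thesis by linarith
qed

lemma center_nb: assumes "center c" "n \<in> N c"
  shows "leaf n \<or> (leg n \<and> (\<exists>l. N n = {l, c} \<and> leaf l))"
proof -
  have e: "E c n" using assms Nmem by auto
  have cV: "c \<in> V" and nV: "n \<in> V" using EV e by auto
  have "crit E c n" using allcrit e .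
  then consider (1) "\<forall>x. E c x \<longrightarrow> x = n" | (2) "\<forall>x. E n x \<longrightarrow> x = c"
    | (3) x where "x \<noteq> n" "E c x" "\<forall>y. E c y \<longrightarrow> y = n \<or> y = x" "\<forall>y. E x y \<longrightarrow> y = c"
    | (4) x where "x \<noteq> c" "E n x" "\<forall>y. E n y \<longrightarrow> y = c \<or> y = x" "\<forall>y. E x y \<longrightarrow> y = n"
    unfolding crit_def by blast
  then show ?thesis
  proof cases
    case 1
    then have "N c \<subseteq> {n}" using Nmem by auto
    then have "card (N c) \<le> 1" using card_mono[of "{n}" "N c"] by simp
    then show ?thesis using center_deg[OF assms(1)] by linarith
  next
    case 2
    then have "N n = {c}" using Nmem e Esym by auto
    then show ?thesis unfolding leaf_def using nV by auto
  next
    case 3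
    have Nx: "N x = {c}" using 3 Nmem Esym by auto
    have xV: "x \<in> V" using 3 EV by auto
    have lx: "leaf x" unfolding leaf_def using Nx xV by auto
    have Nc: "N c = {n, x}" using 3 Nmem e by auto
    show ?thesis
    proof (rule ccontr)
      assume "\<not> ?thesis"
      then have "\<not> leaf n" by auto
      then have "leg c" unfolding leg_def using Nc cV lx 3(1) by auto
      then show False using assms(1) unfolding center_def by auto
    qed
  next
    case 4
    have Nx: "N x = {n}" using 4 Nmem Esym by auto
    have xV: "x \<in> V" using 4 EV by auto
    have lx: "leaf x" unfolding leaf_def using Nx xV by auto
    have Nn: "N n = {c, x}" using 4 Nmem e Esym by auto
    have "\<not> leaf c" using assms(1) unfolding center_def by auto
    then have "leg n" unfolding leg_def using Nn nV lx 4(1) by auto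
    then show ?thesis using Nn lx by (auto intro!: exI[of _ x])
  qed
qed

lemma leg_nb: assumes "leg x" "N x = {l, w}" "leaf l" "\<not> leaf w" "w \<in> V"
  shows "center w \<or> (leg w \<and> (\<exists>l'. N w = {l', x} \<and> leaf l'))"
proof (cases "leg w")
  case True
  then obtain l' w' where w': "N w = {l', w'}" "l' \<noteq> w'" "leaf l'" "\<not> leaf w'" using leg_N by blast
  have "E x w" using assms(2) Nmem by auto
  then have "x \<in> N w" using Esym Nmem by auto
  moreover have "\<not> leaf x" using assms(1) leafnotleg by auto
  ultimately have "x = w'" using w' by auto
  then show ?thesis using True w' by auto
next
  case False
  then show ?thesis using assms unfolding center_def by auto
qed

end


context cg begin

lemma Nsym: "a \<in> N b \<Longrightarrow> b \<in> N a" using Nmem Esym by metis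

definition dd where "dd x w = (SOME z. z \<in> {x, w})"
definition hc where "hc c = (if \<exists>l\<in>N c. leaf l then 4 else if card (N c) \<ge> 3 then 3 else (0::nat))"
definition hleg where "hleg x = (if (\<exists>w\<in>N x. center w \<and> hc w = 0) \<or> (\<exists>w\<in>N x. leg w \<and> dd x w = x) then 4 else (0::nat))"
definition h where "h v = (if leaf v then (if \<exists>u\<in>N v. leg u \<and> hleg u = 0 then 3 else 0)
   else if leg v then hleg v else if center v then hc v else 0)"

lemma dd_comm: "dd x w = dd w x" unfolding dd_def by (simp add: insert_commute)
lemma dd_in: "dd x w = x \<or> dd x w = w"
proof -
  have "dd x w \<in> {x, w}" unfolding dd_def by (rule someI[of _ x]) simp
  then show ?thesis by simp
qed

lemma hc_le: "hc c \<le> 4" by (simp add: hc_def)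
lemma hleg_le: "hleg c \<le> 4" by (simp add: hleg_def)
lemma h_le4: "h v \<le> 4" unfolding h_def using hc_le hleg_le by simp

lemma leaf_center_nb: "\<not> center l" "\<not> leg l" if "leaf l" using that unfolding center_def leg_def leaf_def by auto

lemma h_leaf_center: assumes "leaf l" "N l = {u}" "center u"
  shows "h l = 0" "h u = 4"
proof -
  have "\<not> leg u" using assms(3) unfolding center_def by auto
  then show "h l = 0" unfolding h_def using assms by auto
  have "l \<in> N u" using assms(2) Nsym by auto
  then have "hc u = 4" unfolding hc_def using assms(1) by auto
  then show "h u = 4" unfolding h_def using assms(3) unfolding center_def by auto
qed

lemma h_leaf_leg: assumes "leaf l" "N l = {u}" "leg u"
  shows "h l = (if hleg u = 0 then 3 else 0)" "h u = hleg u"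
  using assms leafnotleg unfolding h_def by auto

lemma h_leg: assumes "leg x" shows "h x = hleg x"
  using assms leafnotleg unfolding h_def by auto

lemma h_center: assumes "center x" shows "h x = hc x"
  using assms unfolding h_def center_def by auto

lemma hleg_center: assumes "leg x" "N x = {l, w}" "leaf l" "center w"
  shows "hleg x = (if hc w = 0 then 4 else 0)"
proof -
  have nl: "\<not> center l" "\<not> leg l" using leaf_center_nb[OF assms(3)] by auto
  have nw: "\<not> leg w" using assms(4) unfolding center_def by simp
  have 1: "(\<exists>w'\<in>N x. center w' \<and> hc w' = 0) = (hc w = 0)" using assms(2,4) nl by auto
  have 2: "\<not> (\<exists>w'\<in>N x. leg w' \<and> dd x w' = x)" using assms(2) nl nw by auto
  have 2: "(\<exists>w'\<in>N x. leg w' \<and> dd x w' = x) = False" using 2 by simp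
  show ?thesis unfolding hleg_def 1 2 by simp
qed

lemma hleg_leg: assumes "leg x" "N x = {l, w}" "leaf l" "leg w"
  shows "hleg x = (if dd x w = x then 4 else 0)"
proof -
  have nl: "\<not> center l" "\<not> leg l" using leaf_center_nb[OF assms(3)] by auto
  have nw: "\<not> center w" using assms(4) unfolding center_def by simp
  have 1: "\<not> (\<exists>w'\<in>N x. center w' \<and> hc w' = 0)" using assms(2) nl nw by auto
  have 2: "(\<exists>w'\<in>N x. leg w' \<and> dd x w' = x) = (dd x w = x)" using assms(2,4) nl by auto
  have 1: "(\<exists>w'\<in>N x. center w' \<and> hc w' = 0) = False" using 1 by simp
  show ?thesis unfolding hleg_def 1 2 by simp
qed

lemma rdf: "is_3RDF V E h"
  unfolding is_3RDF_def
proof (intro conjI ballI impI)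
  fix v assume "v \<in> V" then show "h v \<le> 4" using h_le4 by auto
next
  fix v assume vV: "v \<in> V" and hv: "h v < 3"
  have wit: "card (active_nbhd V E h v) + 3 \<le> sum h (insert v (active_nbhd V E h v))"
    if "A \<subseteq> N v" "\<forall>w\<in>A. h w \<ge> 1" "h v + sum h A \<ge> card A + 3" for A
    using witness[OF sg that] .
  consider "leaf v" | "leg v" | "center v" using vV unfolding center_def by auto
  then show "card (active_nbhd V E h v) + 3 \<le> sum h (insert v (active_nbhd V E h v))"
  proof cases
    case 1
    obtain u where Nv: "N v = {u}" using leaf_N[OF 1] by auto
    have uV: "u \<in> V" "\<not> leaf u" using leaf_nb[OF 1 Nv] by auto
    show ?thesis
    proof (cases "leg u")
      case True
      note hh = h_leaf_leg[OF 1 Nv True]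
      then have "hleg u \<noteq> 0" using hv by (auto split: if_splits)
      then have "h u = 4" using hh unfolding hleg_def by (auto split: if_splits)
      then show ?thesis by (intro wit[of "{u}"]) (auto simp: Nv)
    next
      case False
      then have "center u" using uV unfolding center_def by auto
      note hh = h_leaf_center[OF 1 Nv this]
      then show ?thesis by (intro wit[of "{u}"]) (auto simp: Nv)
    qed
  next
    case 2
    obtain l w where lw: "N v = {l, w}" "l \<noteq> w" "leaf l" "\<not> leaf w" "w \<in> V" using leg_N[OF 2] by blast
    have vl: "N l = {v}"
    proof -
      obtain u where "N l = {u}" using leaf_N[OF lw(3)] by auto
      moreover have "v \<in> N l" using lw(1) Nsym by auto
      ultimately show ?thesis by auto
    qed
    have hv0: "hleg v = 0" using hv h_leg[OF 2] unfolding hleg_def by (auto split: if_splits)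
    have hl: "h l = 3" using h_leaf_leg[OF lw(3) vl 2] hv0 by auto
    consider "center w" | "leg w" using leg_nb[OF 2 lw(1,3,4,5)] by auto
    then show ?thesis
    proof cases
      case 1
      have "hc w \<noteq> 0" using hleg_center[OF 2 lw(1,3) 1] hv0 by (auto split: if_splits)
      then have "h w \<ge> 3" using h_center[OF 1] unfolding hc_def by (auto split: if_splits)
      then show ?thesis using hl lw hv0 h_leg[OF 2] by (intro wit[of "{l, w}"]) auto
    next
      case 3: 2
      have "dd v w \<noteq> v" using hleg_leg[OF 2 lw(1,3) 3] hv0 by (auto split: if_splits)
      then have d: "dd w v = w" using dd_in dd_comm by metis
      obtain l' where l': "N w = {l', v}" "leaf l'" using leg_nb[OF 2 lw(1,3,4,5)] 3
        unfolding center_def by auto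
      have "hleg w = 4" using hleg_leg[OF 3 l'(1,2) 2] d by auto
      then have "h w = 4" using h_leg[OF 3] by auto
      then show ?thesis using lw by (intro wit[of "{w}"]) auto
    qed
  next
    case 3
    have hc0: "hc v = 0" using hv h_center[OF 3] unfolding hc_def by (auto split: if_splits)
    obtain n where n: "n \<in> N v" using Nne vV by auto
    have "\<not> leaf n" using hc0 n unfolding hc_def by (auto split: if_splits)
    then obtain l where l: "leg n" "N n = {l, v}" "leaf l" using center_nb[OF 3 n] by auto
    have "hleg n = 4" using hleg_center[OF l(1,2,3) 3] hc0 by auto
    then have "h n = 4" using h_leg[OF l(1)] by auto
    then show ?thesis using n by (intro wit[of "{n}"]) auto
  qed
qed

end


context cg begin

definition Phi :: "'a \<Rightarrow> int" where "Phi v = 8 * int (h v) - 14"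
definition lf where "lf x = (SOME l. l \<in> N x \<and> leaf l)"
definition S where "S x = Phi x + Phi (lf x)"
definition T where "T v w = (if E v w then (if leaf v then Phi v else if leg v \<and> \<not> leaf w then
   (if leg w then (if dd v w = v then S v else 0) else S v) else 0) else 0)"

lemma lf_eq: assumes "N x = {l,w}" "leaf l" "\<not> leaf w" shows "lf x = l"
  unfolding lf_def by (rule some_equality) (use assms in auto)

lemma finV: "finite V" using sg unfolding simple_graph_def by auto

lemma out_N: "(\<Sum>w\<in>V. T v w) = (\<Sum>w\<in>N v. T v w)"
  by (rule sum.mono_neutral_right) (auto simp: T_def nbhd_def finV)

lemma in_N: "(\<Sum>w\<in>V. T w v) = (\<Sum>w\<in>N v. T w v)"
  by (rule sum.mono_neutral_right) (auto simp: T_def nbhd_def finV dest: Esym)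

lemma leaf_Nof: assumes "leaf l" "u \<in> N l" shows "N l = {u}"
  using leaf_N[OF assms(1)] assms(2) by auto

lemma Tc: assumes "center v" "n \<in> N v"
  shows "T n v = (if leaf n then -14 else if hc v = 0 then 4 else -4)"
proof -
  have e: "E n v" using assms(2) Nmem Esym by auto
  have nl: "\<not> leaf v" "\<not> leg v" using assms(1) unfolding center_def by auto
  consider "leaf n" | l where "leg n" "N n = {l, v}" "leaf l" using center_nb[OF assms] by auto
  then show ?thesis
  proof cases
    case 1
    have "N n = {v}" using leaf_Nof[OF 1] Nsym assms(2) by auto
    then have "h n = 0" using h_leaf_center[OF 1 _ assms(1)] by auto
    then show ?thesis using 1 e unfolding T_def Phi_def by auto
  next
    case 2
    have nln: "\<not> leaf n" using 2 leafnotleg by auto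
    have "lf n = l" using lf_eq[OF 2(2,3) nl(1)] .
    moreover have Nl: "N l = {n}" using leaf_Nof[OF 2(3)] Nsym 2(2) by auto
    have hn: "h n = (if hc v = 0 then 4 else 0)" using h_leg[OF 2(1)] hleg_center[OF 2(1,2,3) assms(1)] by auto
    have hl: "h l = (if hc v = 0 then 0 else 3)" using h_leaf_leg[OF 2(3) Nl 2(1)] hleg_center[OF 2(1,2,3) assms(1)] by auto
    have "T n v = S n" using e nl nln 2(1) unfolding T_def by auto
    then show ?thesis using hn hl nln \<open>lf n = l\<close> unfolding S_def Phi_def by auto
  qed
qed

lemma gle: assumes vV: "v \<in> V"
  shows "Phi v - (\<Sum>w\<in>N v. T v w) + (\<Sum>w\<in>N v. T w v) \<le> 0"
proof -
  consider "leaf v" | "leg v" | "center v" using vV unfolding center_def by auto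
  then show ?thesis
  proof cases
    case 1
    obtain u where Nv: "N v = {u}" using leaf_N[OF 1] by auto
    have u: "\<not> leaf u" using leaf_nb[OF 1 Nv] by auto
    have e1: "E v u" using Nv Nmem by auto
    then have e: "E v u" "E u v" using Esym by auto
    have "T v u = Phi v" using 1 e unfolding T_def by auto
    moreover have "T u v = 0" using 1 u unfolding T_def by auto
    ultimately show ?thesis using Nv by simp
  next
    case 2
    obtain l w where lw: "N v = {l, w}" "l \<noteq> w" "leaf l" "\<not> leaf w" "w \<in> V" using leg_N[OF 2] by blast
    have Nl: "N l = {v}" using leaf_Nof[OF lw(3)] Nsym lw(1) by auto
    have e1: "E v l" "E v w" using lw(1) Nmem by auto
    then have e: "E v l" "E v w" "E l v" "E w v" using Esym by auto
    have vnl: "\<not> leaf v" using 2 leafnotleg by auto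
    have lfv: "lf v = l" using lf_eq[OF lw(1,3,4)] .
    have Tvl: "T v l = 0" using vnl lw(3) unfolding T_def by auto
    have Tlv: "T l v = Phi l" using lw(3) e unfolding T_def by auto
    have sums: "Phi v - (\<Sum>w\<in>N v. T v w) + (\<Sum>w\<in>N v. T w v) = Phi v - T v w + Phi l + T w v"
      using lw(1,2) Tvl Tlv by simp
    consider "center w" | "leg w" using leg_nb[OF 2 lw(1,3,4,5)] by auto
    then show ?thesis
    proof cases
      case 1
      have "T v w = S v" using e 2 vnl lw(4) 1 unfolding T_def center_def by auto
      moreover have "T w v = 0" using 1 unfolding T_def center_def by auto
      ultimately show ?thesis using sums lfv unfolding S_def by simp
    next
      case 3: 2
      show ?thesis
      proof (cases "dd v w = v")
        case True
        then have "dd w v \<noteq> w" using dd_comm lw(2) lw(1) by (metis Eirr e(2))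
        then have "T w v = 0" using 2 vnl lw(4) unfolding T_def by auto
        moreover have "T v w = S v" using e 2 vnl lw(4) 3 True unfolding T_def by auto
        ultimately show ?thesis using sums lfv unfolding S_def by simp
      next
        case False
        then have d: "dd w v = w" using dd_in dd_comm by metis
        obtain l' where l': "N w = {l', v}" "leaf l'" using leg_nb[OF 2 lw(1,3,4,5)] 3
          unfolding center_def by auto
        have wnl: "\<not> leaf w" using lw by auto
        have Tvw: "T v w = 0" using False e 3 vnl wnl unfolding T_def by auto
        have Twv: "T w v = S w" using d e 3 2 wnl vnl unfolding T_def by auto
        have hv0: "hleg v = 0" using hleg_leg[OF 2 lw(1,3) 3] False by auto
        have hw4: "hleg w = 4" using hleg_leg[OF 3 l'(1,2) 2] d by auto
        have Nl': "N l' = {w}" using leaf_Nof[OF l'(2)] Nsym l'(1) by auto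
        have "h v = 0" using h_leg[OF 2] hv0 by auto
        moreover have "h l = 3" using h_leaf_leg[OF lw(3) Nl 2] hv0 by auto
        moreover have "h w = 4" using h_leg[OF 3] hw4 by auto
        moreover have "h l' = 0" using h_leaf_leg[OF l'(2) Nl' 3] hw4 by auto
        moreover have "lf w = l'" using lf_eq[OF l'(1,2)] vnl by auto
        ultimately show ?thesis using sums Tvw Twv unfolding S_def Phi_def by simp
      qed
    qed
  next
    case 3
    have nl: "\<not> leaf v" "\<not> leg v" using 3 unfolding center_def by auto
    have out0: "(\<Sum>w\<in>N v. T v w) = 0" by (rule sum.neutral) (use nl in \<open>simp add: T_def\<close>)
    have d2: "card (N v) \<ge> 2" using center_deg[OF 3] .
    have hv: "h v = hc v" using h_center[OF 3] .
    show ?thesis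
    proof (cases "\<exists>l\<in>N v. leaf l")
      case True
      then obtain l0 where l0: "l0 \<in> N v" "leaf l0" by auto
      have hc4: "hc v = 4" using True unfolding hc_def by auto
      have b: "\<forall>n\<in>N v - {l0}. T n v \<le> -4" using Tc[OF 3] hc4 by auto
      have "(\<Sum>n\<in>N v - {l0}. T n v) \<le> of_nat (card (N v - {l0})) * (-4)"
        by (rule sum_bounded_above) (use b in auto)
      moreover have "card (N v - {l0}) = card (N v) - 1" using l0 Nfin by auto
      moreover have "(\<Sum>n\<in>N v. T n v) = T l0 v + (\<Sum>n\<in>N v - {l0}. T n v)"
        using l0 Nfin by (simp add: sum.remove)
      moreover have "T l0 v = -14" using Tc[OF 3 l0(1)] l0 by auto
      ultimately have "(\<Sum>n\<in>N v. T n v) \<le> -18" using d2 by (simp add: of_nat_diff)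
      then show ?thesis using out0 hv hc4 unfolding Phi_def by simp
    next
      case False
      then have b: "\<forall>n\<in>N v. T n v = (if hc v = 0 then 4 else -4)" using Tc[OF 3] by auto
      show ?thesis
      proof (cases "card (N v) \<ge> 3")
        case True
        then have hc3: "hc v = 3" using False unfolding hc_def by auto
        have "(\<Sum>n\<in>N v. T n v) = of_nat (card (N v)) * (-4)" using b hc3 by simp
        then show ?thesis using out0 hv hc3 True unfolding Phi_def by simp
      next
        case c: False
        then have hc0: "hc v = 0" using False unfolding hc_def by auto
        have "card (N v) = 2" using c d2 by auto
        then have "(\<Sum>n\<in>N v. T n v) = 8" using b hc0 by simp
        then show ?thesis using out0 hv hc0 unfolding Phi_def by simp
      qed
    qed
  qed
qed

lemma weight_bound: "4 * sum h V \<le> 7 * card V"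
proof -
  have sw: "(\<Sum>v\<in>V. \<Sum>w\<in>V. T w v) = (\<Sum>v\<in>V. \<Sum>w\<in>V. T v w)" by (rule sum.swap)
  have "(\<Sum>v\<in>V. Phi v) = (\<Sum>v\<in>V. Phi v - (\<Sum>w\<in>V. T v w) + (\<Sum>w\<in>V. T w v))"
    by (simp only: sum.distrib sum_subtractf sw)
  also have "\<dots> \<le> 0"
    by (rule sum_nonpos) (use gle out_N in_N in auto)
  finally have "(\<Sum>v\<in>V. Phi v) \<le> 0" .
  moreover have "(\<Sum>v\<in>V. Phi v) = 8 * int (sum h V) - 14 * int (card V)"
    unfolding Phi_def by (simp add: sum_subtractf sum_distrib_left of_nat_sum)
  ultimately show ?thesis by linarith
qed

end


lemma main: "good V E \<Longrightarrow> \<exists>h. is_3RDF V E h \<and> 4 * sum h V \<le> 7 * card V"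
proof (induction "card {(a,b). E a b}" arbitrary: E rule: less_induct)
  case less
  have sgE: "simple_graph V E" using less.prems unfolding good_def by auto
  show ?case
  proof (cases "\<exists>u v. E u v \<and> \<not> crit E u v")
    case True
    then obtain u v where uv: "E u v" "\<not> crit E u v" by blast
    define E' where "E' = (\<lambda>a b. E a b \<and> \<not> ((a = u \<and> b = v) \<or> (a = v \<and> b = u)))"
    have g': "good V E'" using remove_good[OF less.prems uv] unfolding E'_def .
    have "{(a,b). E a b} \<subseteq> V \<times> V" using sgE unfolding simple_graph_def by auto
    moreover have "finite V" using sgE unfolding simple_graph_def by simp
    ultimately have fin: "finite {(a,b). E a b}"
      using finite_subset finite_cartesian_product by blast
    have sub: "{(a,b). E' a b} \<subseteq> {(a,b). E a b}" unfolding E'_def by auto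
    have i1: "(u,v) \<in> {(a,b). E a b}" using uv(1) by simp
    have i2: "(u,v) \<notin> {(a,b). E' a b}" unfolding E'_def by simp
    have ne: "{(a,b). E' a b} \<noteq> {(a,b). E a b}" using i1 i2 by metis
    have "{(a,b). E' a b} \<subset> {(a,b). E a b}" by (rule psubsetI[OF sub ne])
    then have "card {(a,b). E' a b} < card {(a,b). E a b}" by (rule psubset_card_mono[OF fin])
    from less.hyps[OF this g'] obtain h where h: "is_3RDF V E' h" "4 * sum h V \<le> 7 * card V" by blast
    have "is_3RDF V E h" by (rule mono3[OF sgE _ h(1)]) (simp add: E'_def)
    then show ?thesis using h(2) by blast
  next
    case False
    interpret cg V E
    proof
      show "good V E" by (rule less.prems)
      show "\<And>a b. E a b \<Longrightarrow> crit E a b" using False by blast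
    qed
    have "is_3RDF V E h" by (rule rdf)
    moreover have "4 * sum h V \<le> 7 * card V" by (rule weight_bound)
    ultimately show ?thesis by (intro exI[of _ h]) (rule conjI)
  qed
qed

lemma cross: "xs \<noteq> [] \<Longrightarrow> hd xs \<in> S \<Longrightarrow> last xs \<notin> S \<Longrightarrow>
  \<exists>i. Suc i < length xs \<and> xs ! i \<in> S \<and> xs ! Suc i \<notin> S"
proof (induction xs)
  case Nil then show ?case by simp
next
  case (Cons x ys)
  show ?case
  proof (cases "ys = []")
    case True then show ?thesis using Cons by simp
  next
    case ne: False
    show ?thesis
    proof (cases "hd ys \<in> S")
      case True
      then obtain i where "Suc i < length ys" "ys ! i \<in> S" "ys ! Suc i \<notin> S"
        using Cons ne by auto
      then show ?thesis by (intro exI[of _ "Suc i"]) auto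
    next
      case False
      then show ?thesis using Cons ne by (intro exI[of _ 0]) (auto simp: hd_conv_nth)
    qed
  qed
qed

lemma walk_cross:
  assumes "is_walk V E xs" "hd xs \<in> S" "last xs \<notin> S"
  shows "\<exists>p q. p \<in> S \<and> q \<notin> S \<and> E p q"
proof -
  obtain i where "Suc i < length xs" "xs ! i \<in> S" "xs ! Suc i \<notin> S"
    using cross[of xs S] assms unfolding is_walk_def by auto
  then show ?thesis using assms(1) unfolding is_walk_def by blast
qed

lemma tree_good: assumes t: "is_tree V E" and c: "card V \<ge> 3" shows "good V E"
proof -
  have sgE: "simple_graph V E" and con: "connected_graph V E" using t unfolding is_tree_def by auto
  have fin: "finite V" using sgE unfolding simple_graph_def by auto
  have other: "\<exists>w\<in>V. w \<notin> {a, b}" for a b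
  proof -
    have "card V - card {a,b} \<le> card (V - {a,b})" by (rule diff_card_le_card_Diff) simp
    moreover have "card {a,b} \<le> 2" by (simp add: card_insert_if)
    ultimately have "card (V - {a,b}) > 0" using c by linarith
    then have "V - {a,b} \<noteq> {}" by (metis card.empty less_irrefl)
    then show ?thesis by auto
  qed
  have walk: "\<exists>xs. is_walk V E xs \<and> hd xs = u \<and> last xs = v" if "u \<in> V" "v \<in> V" for u v
    using con that unfolding connected_graph_def by auto
  have A: "\<forall>v\<in>V. \<exists>w. E v w"
  proof
    fix v assume v: "v \<in> V"
    obtain w where w: "w \<in> V" "w \<notin> {v, v}" using other by blast
    obtain xs where "is_walk V E xs" "hd xs = v" "last xs = w" using walk[OF v w(1)] by auto
    then obtain p q where "p \<in> {v}" "q \<notin> {v}" "E p q" using walk_cross[of V E xs "{v}"] w by auto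
    then show "\<exists>w. E v w" by auto
  qed
  have B: "\<forall>a b. E a b \<longrightarrow> (\<exists>c. c \<noteq> b \<and> E a c) \<or> (\<exists>c. c \<noteq> a \<and> E b c)"
  proof (intro allI impI)
    fix a b assume e: "E a b"
    then have a: "a \<in> V" using sgE unfolding simple_graph_def by auto
    obtain w where w: "w \<in> V" "w \<notin> {a, b}" using other by blast
    obtain xs where "is_walk V E xs" "hd xs = a" "last xs = w" using walk[OF a w(1)] by auto
    then obtain p q where "p \<in> {a,b}" "q \<notin> {a,b}" "E p q" using walk_cross[of V E xs "{a,b}"] w by auto
    then show "(\<exists>c. c \<noteq> b \<and> E a c) \<or> (\<exists>c. c \<noteq> a \<and> E b c)" by auto
  qed
  show ?thesis unfolding good_def using sgE A B by blast
qed

theorem theorem13: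
  fixes V :: "'a set" and E :: "'a \<Rightarrow> 'a \<Rightarrow> bool"
  assumes "is_tree V E" and "card V \<ge> 3"
  shows "real (triple_roman_domination_number V E) \<le> 7 * real (card V) / 4"
proof -
  obtain h where h: "is_3RDF V E h" "4 * sum h V \<le> 7 * card V"
    using main[OF tree_good[OF assms]] by blast
  have "triple_roman_domination_number V E \<le> sum h V"
    unfolding triple_roman_domination_number_def
    by (rule Least_le) (use h(1) in \<open>auto simp: weight_def\<close>)
  then have "4 * triple_roman_domination_number V E \<le> 7 * card V" using h(2) by linarith
  then have "real (4 * triple_roman_domination_number V E) \<le> real (7 * card V)"
    by (simp only: of_nat_le_iff)
  then show ?thesis by simp
qed


end
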